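(* Let $f:A\to B$ be a ring homomorphism and let $\mathfrak b$ be an ideal of $B$. Let $A\bowtie^f\mathfrak b:=\{(a,f(a)+b): a\in A,\ b\in\mathfrak b\}$, a subring of $A\times B$. Assume that $f^{-1}(\mathfrak b)$ is a regular ideal of $A$ and $\mathfrak b$ is a regular ideal of $B$. Then the following are equivalent: (i) $A\bowtie^f\mathfrak b$ is a Prüfer ring; (ii) $A$ and $B$ are Prüfer rings and $\mathfrak b=B$.
   Context: All rings are commutative with identity. An element of a ring is regular if it is not a zerodivisor; an ideal is regular if it contains a regular element. A ring $R$ is a Prüfer ring if every regular finitely generated ideal of $R$ is invertible. *)

theory Defs
  imports "HOL-Algebra.Algebra"
begin

definition regular_elem :: "('a, 'm) ring_scheme \<Rightarrow> 'a \<Rightarrow> bool" where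
  "regular_elem R x \<longleftrightarrow> x \<in> carrier R \<and>
     (\<forall>y \<in> carrier R. x \<otimes>\<^bsub>R\<^esub> y = \<zero>\<^bsub>R\<^esub> \<longrightarrow> y = \<zero>\<^bsub>R\<^esub>)"

definition regular_ideal :: "('a, 'm) ring_scheme \<Rightarrow> 'a set \<Rightarrow> bool" where
  "regular_ideal R I \<longleftrightarrow> ideal I R \<and> (\<exists>x \<in> I. regular_elem R x)"

definition fg_ideal :: "('a, 'm) ring_scheme \<Rightarrow> 'a set \<Rightarrow> bool" where
  "fg_ideal R I \<longleftrightarrow> ideal I R \<and> (\<exists>S. finite S \<and> S \<subseteq> carrier R \<and> I = genideal R S)"

text \<open>Invertible ideal: I (R:I) = R inside the total quotient ring T(R), i.e.
  1 = sum_i a_i x_i with a_i in I and x_i in T(R) with x_i I \<subseteq> R.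
  Elements x_i of T(R) are written with a common regular denominator s,
  x_i = c_i / s; the condition x_i I \<subseteq> R reads c_i a \<in> s R for all a \<in> I,
  and sum_i a_i (c_i / s) = 1 reads sum_i a_i c_i = s.\<close>
definition invertible_ideal :: "('a, 'm) ring_scheme \<Rightarrow> 'a set \<Rightarrow> bool" where
  "invertible_ideal R I \<longleftrightarrow> ideal I R \<and>
     (\<exists>s n a c. regular_elem R s \<and>
        (\<forall>i < (n::nat). a i \<in> I \<and> c i \<in> carrier R \<and>
           (\<forall>x \<in> I. \<exists>r \<in> carrier R. c i \<otimes>\<^bsub>R\<^esub> x = s \<otimes>\<^bsub>R\<^esub> r)) \<and>
        finsum R (\<lambda>i. a i \<otimes>\<^bsub>R\<^esub> c i) {..<n} = s)"

definition pruefer_ring :: "('a, 'm) ring_scheme \<Rightarrow> bool" where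
  "pruefer_ring R \<longleftrightarrow> cring R \<and>
     (\<forall>I. fg_ideal R I \<and> regular_ideal R I \<longrightarrow> invertible_ideal R I)"

definition amalgamation ::
  "('a, 'm) ring_scheme \<Rightarrow> ('b, 'n) ring_scheme \<Rightarrow> ('a \<Rightarrow> 'b) \<Rightarrow> 'b set \<Rightarrow> ('a \<times> 'b) ring" where
  "amalgamation A B f J = (RDirProd A B)
     \<lparr>carrier := {(a, f a \<oplus>\<^bsub>B\<^esub> b) | a b. a \<in> carrier A \<and> b \<in> J}\<rparr>"

end

theory Submission
  imports Defs
begin

lemma RDP_mult[simp]: "(a,b) \<otimes>\<^bsub>RDirProd A B\<^esub> (c,d) = (a \<otimes>\<^bsub>A\<^esub> c, b \<otimes>\<^bsub>B\<^esub> d)"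
  by (simp add: RDirProd_def DirProd_def monoid.defs)
lemma RDP_add[simp]: "(a,b) \<oplus>\<^bsub>RDirProd A B\<^esub> (c,d) = (a \<oplus>\<^bsub>A\<^esub> c, b \<oplus>\<^bsub>B\<^esub> d)"
  by (simp add: RDirProd_def DirProd_def monoid.defs)
lemma RDP_zero[simp]: "\<zero>\<^bsub>RDirProd A B\<^esub> = (\<zero>\<^bsub>A\<^esub>, \<zero>\<^bsub>B\<^esub>)"
  by (simp add: RDirProd_def DirProd_def monoid.defs)
lemma RDP_one[simp]: "\<one>\<^bsub>RDirProd A B\<^esub> = (\<one>\<^bsub>A\<^esub>, \<one>\<^bsub>B\<^esub>)"
  by (simp add: RDirProd_def DirProd_def monoid.defs)
lemmas RDP_carrier[simp] = RDirProd_carrier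

lemma RDP_neg:
  assumes "ring A" "ring B" "a \<in> carrier A" "b \<in> carrier B"
  shows "\<ominus>\<^bsub>RDirProd A B\<^esub> (a,b) = (\<ominus>\<^bsub>A\<^esub> a, \<ominus>\<^bsub>B\<^esub> b)"
proof -
  interpret P: ring "RDirProd A B" using RDirProd_ring assms by blast
  interpret A: ring A by fact
  interpret B: ring B by fact
  show ?thesis
    by (rule P.minus_equality) (use assms in \<open>auto simp: A.l_neg B.l_neg\<close>)
qed

lemma (in cring) ideal_crit:
  assumes "I \<subseteq> carrier R" "\<zero> \<in> I" "\<And>a b. a\<in>I \<Longrightarrow> b\<in>I \<Longrightarrow> a \<oplus> b \<in> I"
    "\<And>a. a\<in>I \<Longrightarrow> \<ominus>a \<in> I" "\<And>a x. a\<in>I \<Longrightarrow> x\<in>carrier R \<Longrightarrow> x\<otimes>a \<in> I"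
  shows "ideal I R"
proof (rule idealI)
  show "ring R" ..
  show "subgroup I (add_monoid R)"
    by (rule subgroup.intro) (use assms in \<open>auto simp: a_inv_def[symmetric]\<close>)
  show "\<And>a x. a \<in> I \<Longrightarrow> x \<in> carrier R \<Longrightarrow> x \<otimes> a \<in> I" by fact
  show "\<And>a x. a \<in> I \<Longrightarrow> x \<in> carrier R \<Longrightarrow> a \<otimes> x \<in> I"
    using assms m_comm by (metis subsetD)
qed

lemma (in ring) finsum_ideal:
  assumes "ideal I R" "\<And>i. i < (n::nat) \<Longrightarrow> g i \<in> I"
  shows "finsum R g {..<n} \<in> I"
  using assms(2)
proof (induction n)
  case 0
  then show ?case using assms(1) by (simp add: additive_subgroup.zero_closed ideal.axioms(1))
next
  case (Suc n)
  have sub: "I \<subseteq> carrier R" using assms(1) ideal.axioms(1) additive_subgroup.a_subset by blast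
  have g: "g \<in> {..<n} \<rightarrow> carrier R" "g n \<in> carrier R" using Suc.prems sub by auto
  have "finsum R g {..<Suc n} = g n \<oplus> finsum R g {..<n}"
    using g by (simp add: lessThan_Suc finsum_insert)
  moreover have "finsum R g {..<n} \<in> I" using Suc by auto
  ultimately show ?case using Suc.prems assms(1) 
    by (simp add: additive_subgroup.a_closed ideal.axioms(1))
qed

lemma RDP_finsum:
  assumes "ring A" "ring B" "g \<in> {..<(n::nat)} \<rightarrow> carrier (RDirProd A B)"
  shows "finsum (RDirProd A B) g {..<n} = (finsum A (\<lambda>i. fst (g i)) {..<n}, finsum B (\<lambda>i. snd (g i)) {..<n})"
proof -
  interpret P: ring "RDirProd A B" using RDirProd_ring assms by blast
  interpret A: ring A by fact
  interpret B: ring B by fact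
  show ?thesis
  using assms(3)
proof (induction n)
  case 0
  then show ?case by simp
next
  case (Suc n)
  have g: "g \<in> {..<n} \<rightarrow> carrier (RDirProd A B)" "g n \<in> carrier (RDirProd A B)" using Suc.prems by (auto simp: Pi_def)
  have "finsum (RDirProd A B) g {..<Suc n} = g n \<oplus>\<^bsub>RDirProd A B\<^esub> finsum (RDirProd A B) g {..<n}"
    using g by (simp add: lessThan_Suc P.finsum_insert)
  also have "\<dots> = g n \<oplus>\<^bsub>RDirProd A B\<^esub> (finsum A (\<lambda>i. fst (g i)) {..<n}, finsum B (\<lambda>i. snd (g i)) {..<n})"
    using Suc g by simp
  also have "\<dots> = (finsum A (\<lambda>i. fst (g i)) {..<Suc n}, finsum B (\<lambda>i. snd (g i)) {..<Suc n})"
    using g by (cases "g n") (auto simp: lessThan_Suc A.finsum_insert B.finsum_insert Pi_def mem_Times_iff)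
  finally show ?case .
qed
qed

lemma cring_RDP:
  assumes "cring A" "cring B" shows "cring (RDirProd A B)"
proof -
  interpret A: cring A by fact
  interpret B: cring B by fact
  interpret P: ring "RDirProd A B" using RDirProd_ring A.ring_axioms B.ring_axioms by blast
  show ?thesis
  proof (rule cring.intro)
    show "ring (RDirProd A B)" ..
    show "comm_monoid (RDirProd A B)"
      by (rule comm_monoid.intro, rule P.monoid_axioms, rule comm_monoid_axioms.intro)
        (auto simp: A.m_comm B.m_comm)
  qed
qed

lemma reg_pair:
  assumes "regular_elem A a" "regular_elem B b"
  shows "regular_elem (RDirProd A B) (a,b)"
  using assms unfolding regular_elem_def by auto

lemma reg_fst:
  assumes "cring B" "regular_elem (RDirProd A B) (a,b)"
  shows "regular_elem A a"
proof -
  interpret B: cring B by fact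
  have ab: "a \<in> carrier A" "b \<in> carrier B" and H: "\<And>y. y \<in> carrier (RDirProd A B) \<Longrightarrow> (a,b) \<otimes>\<^bsub>RDirProd A B\<^esub> y = \<zero>\<^bsub>RDirProd A B\<^esub> \<Longrightarrow> y = \<zero>\<^bsub>RDirProd A B\<^esub>"
    using assms(2) unfolding regular_elem_def by auto
  show ?thesis unfolding regular_elem_def
  proof (intro conjI ballI impI)
    fix y assume y: "y \<in> carrier A" "a \<otimes>\<^bsub>A\<^esub> y = \<zero>\<^bsub>A\<^esub>"
    have "(y, \<zero>\<^bsub>B\<^esub>) = \<zero>\<^bsub>RDirProd A B\<^esub>"
      by (rule H) (use y ab in simp_all)
    then show "y = \<zero>\<^bsub>A\<^esub>" by simp
  qed (use ab in simp)
qed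

lemma reg_snd:
  assumes "cring A" "regular_elem (RDirProd A B) (a,b)"
  shows "regular_elem B b"
proof -
  interpret A: cring A by fact
  have ab: "a \<in> carrier A" "b \<in> carrier B" and H: "\<And>y. y \<in> carrier (RDirProd A B) \<Longrightarrow> (a,b) \<otimes>\<^bsub>RDirProd A B\<^esub> y = \<zero>\<^bsub>RDirProd A B\<^esub> \<Longrightarrow> y = \<zero>\<^bsub>RDirProd A B\<^esub>"
    using assms(2) unfolding regular_elem_def by auto
  show ?thesis unfolding regular_elem_def
  proof (intro conjI ballI impI)
    fix y assume y: "y \<in> carrier B" "b \<otimes>\<^bsub>B\<^esub> y = \<zero>\<^bsub>B\<^esub>"
    have "(\<zero>\<^bsub>A\<^esub>, y) = \<zero>\<^bsub>RDirProd A B\<^esub>"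
      by (rule H) (use y ab in simp_all)
    then show "y = \<zero>\<^bsub>B\<^esub>" by simp
  qed (use ab in simp)
qed

lemma ideal_prod:
  assumes "cring A" "cring B" "ideal I1 A" "ideal I2 B"
  shows "ideal (I1 \<times> I2) (RDirProd A B)"
proof -
  interpret A: cring A by fact
  interpret B: cring B by fact
  interpret P: cring "RDirProd A B" using cring_RDP assms by blast
  interpret I1: ideal I1 A by fact
  interpret I2: ideal I2 B by fact
  show ?thesis
  proof (rule P.ideal_crit)
    show "I1 \<times> I2 \<subseteq> carrier (RDirProd A B)" using I1.a_subset I2.a_subset by auto
  next
    fix a assume "a \<in> I1 \<times> I2"
    then show "\<ominus>\<^bsub>RDirProd A B\<^esub> a \<in> I1 \<times> I2"
      using RDP_neg[OF A.ring_axioms B.ring_axioms] I1.a_subset I2.a_subset by auto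
  next
    fix a x assume "a \<in> I1 \<times> I2" "x \<in> carrier (RDirProd A B)"
    then show "x \<otimes>\<^bsub>RDirProd A B\<^esub> a \<in> I1 \<times> I2"
      by (auto simp: I1.I_l_closed I2.I_l_closed)
  qed auto
qed

lemma slice1:
  assumes "cring A" "cring B" "ideal G (RDirProd A B)"
  shows "ideal {x \<in> carrier A. (x, \<zero>\<^bsub>B\<^esub>) \<in> G} A"
proof -
  interpret A: cring A by fact
  interpret B: cring B by fact
  interpret P: cring "RDirProd A B" using cring_RDP assms by blast
  interpret G: ideal G "RDirProd A B" by fact
  show ?thesis
  proof (rule A.ideal_crit)
    show "\<zero>\<^bsub>A\<^esub> \<in> {x \<in> carrier A. (x, \<zero>\<^bsub>B\<^esub>) \<in> G}"
      using G.zero_closed by simp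
  next
    fix a b assume "a \<in> {x \<in> carrier A. (x, \<zero>\<^bsub>B\<^esub>) \<in> G}" "b \<in> {x \<in> carrier A. (x, \<zero>\<^bsub>B\<^esub>) \<in> G}"
    then show "a \<oplus>\<^bsub>A\<^esub> b \<in> {x \<in> carrier A. (x, \<zero>\<^bsub>B\<^esub>) \<in> G}"
      using G.a_closed[of "(a, \<zero>\<^bsub>B\<^esub>)" "(b, \<zero>\<^bsub>B\<^esub>)"] by auto
  next
    fix a assume "a \<in> {x \<in> carrier A. (x, \<zero>\<^bsub>B\<^esub>) \<in> G}"
    then show "\<ominus>\<^bsub>A\<^esub> a \<in> {x \<in> carrier A. (x, \<zero>\<^bsub>B\<^esub>) \<in> G}"
      using G.a_inv_closed[of "(a, \<zero>\<^bsub>B\<^esub>)"] RDP_neg[OF A.ring_axioms B.ring_axioms, of a "\<zero>\<^bsub>B\<^esub>"]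
      by auto
  next
    fix a x assume "a \<in> {x \<in> carrier A. (x, \<zero>\<^bsub>B\<^esub>) \<in> G}" "x \<in> carrier A"
    then show "x \<otimes>\<^bsub>A\<^esub> a \<in> {x \<in> carrier A. (x, \<zero>\<^bsub>B\<^esub>) \<in> G}"
      using G.I_l_closed[of "(a, \<zero>\<^bsub>B\<^esub>)" "(x, \<zero>\<^bsub>B\<^esub>)"] by auto
  qed auto
qed

lemma slice2:
  assumes "cring A" "cring B" "ideal G (RDirProd A B)"
  shows "ideal {y \<in> carrier B. (\<zero>\<^bsub>A\<^esub>, y) \<in> G} B"
proof -
  interpret A: cring A by fact
  interpret B: cring B by fact
  interpret P: cring "RDirProd A B" using cring_RDP assms by blast
  interpret G: ideal G "RDirProd A B" by fact
  show ?thesis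
  proof (rule B.ideal_crit)
    show "\<zero>\<^bsub>B\<^esub> \<in> {x \<in> carrier B. (\<zero>\<^bsub>A\<^esub>, x) \<in> G}"
      using G.zero_closed by simp
  next
    fix a b assume "a \<in> {x \<in> carrier B. (\<zero>\<^bsub>A\<^esub>, x) \<in> G}" "b \<in> {x \<in> carrier B. (\<zero>\<^bsub>A\<^esub>, x) \<in> G}"
    then show "a \<oplus>\<^bsub>B\<^esub> b \<in> {x \<in> carrier B. (\<zero>\<^bsub>A\<^esub>, x) \<in> G}"
      using G.a_closed[of "(\<zero>\<^bsub>A\<^esub>, a)" "(\<zero>\<^bsub>A\<^esub>, b)"] by auto
  next
    fix a assume "a \<in> {x \<in> carrier B. (\<zero>\<^bsub>A\<^esub>, x) \<in> G}"
    then show "\<ominus>\<^bsub>B\<^esub> a \<in> {x \<in> carrier B. (\<zero>\<^bsub>A\<^esub>, x) \<in> G}"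
      using G.a_inv_closed[of "(\<zero>\<^bsub>A\<^esub>, a)"] RDP_neg[OF A.ring_axioms B.ring_axioms, of "\<zero>\<^bsub>A\<^esub>" a]
      by auto
  next
    fix a x assume "a \<in> {x \<in> carrier B. (\<zero>\<^bsub>A\<^esub>, x) \<in> G}" "x \<in> carrier B"
    then show "x \<otimes>\<^bsub>B\<^esub> a \<in> {x \<in> carrier B. (\<zero>\<^bsub>A\<^esub>, x) \<in> G}"
      using G.I_l_closed[of "(\<zero>\<^bsub>A\<^esub>, a)" "(\<zero>\<^bsub>A\<^esub>, x)"] by auto
  qed auto
qed

lemma slice_decomp:
  assumes "cring A" "cring B" "ideal G (RDirProd A B)"
  shows "G = {x \<in> carrier A. (x, \<zero>\<^bsub>B\<^esub>) \<in> G} \<times> {y \<in> carrier B. (\<zero>\<^bsub>A\<^esub>, y) \<in> G}"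
proof -
  interpret A: cring A by fact
  interpret B: cring B by fact
  interpret P: cring "RDirProd A B" using cring_RDP assms by blast
  interpret G: ideal G "RDirProd A B" by fact
  show ?thesis
  proof (intro equalityI subsetI)
    fix p assume p: "p \<in> G"
    obtain x y where xy: "p = (x,y)" by (cases p)
    have c: "x \<in> carrier A" "y \<in> carrier B" using G.a_subset p xy by auto
    have "(\<one>\<^bsub>A\<^esub>, \<zero>\<^bsub>B\<^esub>) \<otimes>\<^bsub>RDirProd A B\<^esub> p \<in> G"
      using p by (intro G.I_l_closed) auto
    hence 1: "(x, \<zero>\<^bsub>B\<^esub>) \<in> G" using c xy by simp
    have "(\<zero>\<^bsub>A\<^esub>, \<one>\<^bsub>B\<^esub>) \<otimes>\<^bsub>RDirProd A B\<^esub> p \<in> G"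
      using p by (intro G.I_l_closed) auto
    hence 2: "(\<zero>\<^bsub>A\<^esub>, y) \<in> G" using c xy by simp
    show "p \<in> {x \<in> carrier A. (x, \<zero>\<^bsub>B\<^esub>) \<in> G} \<times> {y \<in> carrier B. (\<zero>\<^bsub>A\<^esub>, y) \<in> G}"
      using 1 2 c xy by auto
  next
    fix p assume "p \<in> {x \<in> carrier A. (x, \<zero>\<^bsub>B\<^esub>) \<in> G} \<times> {y \<in> carrier B. (\<zero>\<^bsub>A\<^esub>, y) \<in> G}"
    then obtain x y where "p = (x,y)" "x \<in> carrier A" "y \<in> carrier B" "(x, \<zero>\<^bsub>B\<^esub>) \<in> G" "(\<zero>\<^bsub>A\<^esub>, y) \<in> G"
      by auto
    then show "p \<in> G" using G.a_closed[of "(x, \<zero>\<^bsub>B\<^esub>)" "(\<zero>\<^bsub>A\<^esub>, y)"] by auto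
  qed
qed

lemma inv_pad:
  assumes "cring R" "regular_elem R s" "ideal I R"
    and "\<forall>i < (n::nat). a i \<in> I \<and> c i \<in> carrier R \<and>
           (\<forall>x \<in> I. \<exists>r \<in> carrier R. c i \<otimes>\<^bsub>R\<^esub> x = s \<otimes>\<^bsub>R\<^esub> r)"
    and "finsum R (\<lambda>i. a i \<otimes>\<^bsub>R\<^esub> c i) {..<n} = s" and "n \<le> m"
  shows "\<exists>a' c'. (\<forall>i < m. a' i \<in> I \<and> c' i \<in> carrier R \<and>
           (\<forall>x \<in> I. \<exists>r \<in> carrier R. c' i \<otimes>\<^bsub>R\<^esub> x = s \<otimes>\<^bsub>R\<^esub> r)) \<and>
        finsum R (\<lambda>i. a' i \<otimes>\<^bsub>R\<^esub> c' i) {..<m} = s"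
proof -
  interpret R: cring R by fact
  interpret I: ideal I R by fact
  have sR: "s \<in> carrier R" using assms(2) unfolding regular_elem_def by simp
  define a' where "a' i = (if i < n then a i else \<zero>\<^bsub>R\<^esub>)" for i
  define c' where "c' i = (if i < n then c i else \<zero>\<^bsub>R\<^esub>)" for i
  have P1: "\<forall>i < m. a' i \<in> I \<and> c' i \<in> carrier R \<and>
           (\<forall>x \<in> I. \<exists>r \<in> carrier R. c' i \<otimes>\<^bsub>R\<^esub> x = s \<otimes>\<^bsub>R\<^esub> r)"
  proof (intro allI impI)
    fix i assume "i < m"
    show "a' i \<in> I \<and> c' i \<in> carrier R \<and> (\<forall>x \<in> I. \<exists>r \<in> carrier R. c' i \<otimes>\<^bsub>R\<^esub> x = s \<otimes>\<^bsub>R\<^esub> r)"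
    proof (cases "i < n")
      case True then show ?thesis using assms(4) by (simp add: a'_def c'_def)
    next
      case False
      have "\<forall>x \<in> I. \<zero>\<^bsub>R\<^esub> \<otimes>\<^bsub>R\<^esub> x = s \<otimes>\<^bsub>R\<^esub> \<zero>\<^bsub>R\<^esub>"
        using I.a_subset sR by auto
      then show ?thesis using False by (auto simp: a'_def c'_def)
    qed
  qed
  have carr: "(\<lambda>i. a' i \<otimes>\<^bsub>R\<^esub> c' i) \<in> {..<m} \<rightarrow> carrier R"
  proof
    fix i assume "i \<in> {..<m}"
    then have "a' i \<in> I" "c' i \<in> carrier R" using P1 by auto
    then show "a' i \<otimes>\<^bsub>R\<^esub> c' i \<in> carrier R" using I.a_subset by blast
  qed
  have U: "{..<m} = {..<n} \<union> {n..<m}" using assms(6) by auto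
  have "finsum R (\<lambda>i. a' i \<otimes>\<^bsub>R\<^esub> c' i) {..<m}
      = finsum R (\<lambda>i. a' i \<otimes>\<^bsub>R\<^esub> c' i) {..<n} \<oplus>\<^bsub>R\<^esub> finsum R (\<lambda>i. a' i \<otimes>\<^bsub>R\<^esub> c' i) {n..<m}"
    unfolding U by (rule R.finsum_Un_disjoint) (use carr U in auto)
  also have "finsum R (\<lambda>i. a' i \<otimes>\<^bsub>R\<^esub> c' i) {n..<m} = finsum R (\<lambda>i. \<zero>\<^bsub>R\<^esub>) {n..<m}"
    by (rule R.finsum_cong') (auto simp: a'_def c'_def)
  also have "\<dots> = \<zero>\<^bsub>R\<^esub>" by (rule R.finsum_zero)
  also have "finsum R (\<lambda>i. a' i \<otimes>\<^bsub>R\<^esub> c' i) {..<n} = finsum R (\<lambda>i. a i \<otimes>\<^bsub>R\<^esub> c i) {..<n}"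
    by (rule R.finsum_cong') (use assms(4) I.a_subset in \<open>auto simp: a'_def c'_def\<close>)
  finally show ?thesis using P1 assms(5) sR by auto
qed

lemma RDP_fst_mult[simp]: "fst (p \<otimes>\<^bsub>RDirProd A B\<^esub> q) = fst p \<otimes>\<^bsub>A\<^esub> fst q"
  by (cases p, cases q) simp
lemma RDP_snd_mult[simp]: "snd (p \<otimes>\<^bsub>RDirProd A B\<^esub> q) = snd p \<otimes>\<^bsub>B\<^esub> snd q"
  by (cases p, cases q) simp

lemma one_regular: "cring A \<Longrightarrow> regular_elem A \<one>\<^bsub>A\<^esub>"
  unfolding regular_elem_def by (simp add: cring.axioms(1) ring.ring_simprules(12) ring.ring_simprules(6))

lemma pruefer_RDP_A:
  assumes "cring A" "cring B" "pruefer_ring (RDirProd A B)"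
  shows "pruefer_ring A"
proof -
  interpret A: cring A by fact
  interpret B: cring B by fact
  interpret P: cring "RDirProd A B" using cring_RDP assms by blast
  show ?thesis unfolding pruefer_ring_def
  proof (intro conjI allI impI)
    show "cring A" by fact
    fix I1 assume H: "fg_ideal A I1 \<and> regular_ideal A I1"
    then obtain S1 where S1: "finite S1" "S1 \<subseteq> carrier A" "I1 = genideal A S1" and idI1: "ideal I1 A"
      unfolding fg_ideal_def by blast
    obtain u where u: "u \<in> I1" "regular_elem A u" using H unfolding regular_ideal_def by blast
    define I where "I = I1 \<times> carrier B"
    have idI: "ideal I (RDirProd A B)" unfolding I_def
      by (rule ideal_prod[OF assms(1,2) idI1 B.oneideal])
    define S where "S = (\<lambda>x. (x, \<zero>\<^bsub>B\<^esub>)) ` S1 \<union> {(\<zero>\<^bsub>A\<^esub>, \<one>\<^bsub>B\<^esub>)}"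
    have Sc: "S \<subseteq> carrier (RDirProd A B)" using S1 unfolding S_def by auto
    have I1c: "I1 \<subseteq> carrier A" using idI1 ideal.axioms(1) additive_subgroup.a_subset by blast
    have "genideal (RDirProd A B) S = I"
    proof
      have "S1 \<subseteq> I1" using S1 A.genideal_self by blast
      moreover have "\<zero>\<^bsub>A\<^esub> \<in> I1" using idI1 additive_subgroup.zero_closed ideal.axioms(1) by blast
      ultimately have "S \<subseteq> I" unfolding S_def I_def by auto
      then show "genideal (RDirProd A B) S \<subseteq> I" using P.genideal_minimal idI by blast
    next
      define G where "G = genideal (RDirProd A B) S"
      have idG: "ideal G (RDirProd A B)" unfolding G_def using P.genideal_ideal Sc by blast
      have SG: "S \<subseteq> G" unfolding G_def using P.genideal_self Sc by blast
      have "S1 \<subseteq> {x \<in> carrier A. (x, \<zero>\<^bsub>B\<^esub>) \<in> G}" using SG S1 unfolding S_def by auto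
      hence 1: "I1 \<subseteq> {x \<in> carrier A. (x, \<zero>\<^bsub>B\<^esub>) \<in> G}"
        using A.genideal_minimal slice1[OF assms(1,2) idG] S1(3) by blast
      have 2: "carrier B \<subseteq> {y \<in> carrier B. (\<zero>\<^bsub>A\<^esub>, y) \<in> G}"
      proof
        fix y assume y: "y \<in> carrier B"
        have "(\<zero>\<^bsub>A\<^esub>, y) \<otimes>\<^bsub>RDirProd A B\<^esub> (\<zero>\<^bsub>A\<^esub>, \<one>\<^bsub>B\<^esub>) \<in> G"
          using SG y unfolding S_def by (intro ideal.I_l_closed[OF idG]) auto
        then show "y \<in> {y \<in> carrier B. (\<zero>\<^bsub>A\<^esub>, y) \<in> G}" using y by simp
      qed
      show "I \<subseteq> genideal (RDirProd A B) S"
        using slice_decomp[OF assms(1,2) idG] 1 2 unfolding I_def G_def[symmetric] by blast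
    qed
    moreover have "finite S" unfolding S_def using S1(1) by simp
    ultimately have fgI: "fg_ideal (RDirProd A B) I"
      unfolding fg_ideal_def using idI Sc by (intro conjI exI[of _ S]) auto
    have "regular_elem (RDirProd A B) (u, \<one>\<^bsub>B\<^esub>)"
      by (rule reg_pair[OF u(2) one_regular[OF assms(2)]])
    moreover have "(u, \<one>\<^bsub>B\<^esub>) \<in> I" using u unfolding I_def by auto
    ultimately have "regular_ideal (RDirProd A B) I" using idI unfolding regular_ideal_def by blast
    hence "invertible_ideal (RDirProd A B) I" using assms(3) fgI unfolding pruefer_ring_def by blast
    then obtain s n a c where s: "regular_elem (RDirProd A B) s"
      and W: "\<forall>i < (n::nat). a i \<in> I \<and> c i \<in> carrier (RDirProd A B) \<and>
           (\<forall>x \<in> I. \<exists>r \<in> carrier (RDirProd A B). c i \<otimes>\<^bsub>RDirProd A B\<^esub> x = s \<otimes>\<^bsub>RDirProd A B\<^esub> r)"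
      and sum: "finsum (RDirProd A B) (\<lambda>i. a i \<otimes>\<^bsub>RDirProd A B\<^esub> c i) {..<n} = s"
      unfolding invertible_ideal_def by blast
    obtain s1 s2 where s12: "s = (s1, s2)" by (cases s)
    have s1: "regular_elem A s1" using reg_fst[OF assms(2)] s s12 by simp
    have Ic: "I \<subseteq> carrier (RDirProd A B)" using idI ideal.axioms(1) additive_subgroup.a_subset by blast
    have carr: "(\<lambda>i. a i \<otimes>\<^bsub>RDirProd A B\<^esub> c i) \<in> {..<n} \<rightarrow> carrier (RDirProd A B)"
    proof
      fix i assume "i \<in> {..<n}"
      then have "a i \<in> carrier (RDirProd A B)" "c i \<in> carrier (RDirProd A B)" using W Ic by auto
      then show "a i \<otimes>\<^bsub>RDirProd A B\<^esub> c i \<in> carrier (RDirProd A B)" by (rule P.m_closed)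
    qed
    have "finsum A (\<lambda>i. fst (a i) \<otimes>\<^bsub>A\<^esub> fst (c i)) {..<n} = s1"
      using RDP_finsum[OF A.ring_axioms B.ring_axioms carr] sum s12 by simp
    moreover have "\<forall>i < n. fst (a i) \<in> I1 \<and> fst (c i) \<in> carrier A \<and>
           (\<forall>x \<in> I1. \<exists>r \<in> carrier A. fst (c i) \<otimes>\<^bsub>A\<^esub> x = s1 \<otimes>\<^bsub>A\<^esub> r)"
    proof (intro allI impI conjI ballI)
      fix i assume i: "i < n"
      show "fst (a i) \<in> I1" using W i unfolding I_def by auto
      show "fst (c i) \<in> carrier A" using W i by auto
      fix x assume x: "x \<in> I1"
      hence "(x, \<zero>\<^bsub>B\<^esub>) \<in> I" unfolding I_def by auto
      then obtain r where r: "r \<in> carrier (RDirProd A B)" "c i \<otimes>\<^bsub>RDirProd A B\<^esub> (x, \<zero>\<^bsub>B\<^esub>) = s \<otimes>\<^bsub>RDirProd A B\<^esub> r"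
        using W i by blast
      have "fst (c i \<otimes>\<^bsub>RDirProd A B\<^esub> (x, \<zero>\<^bsub>B\<^esub>)) = fst (s \<otimes>\<^bsub>RDirProd A B\<^esub> r)" using r by simp
      hence "fst (c i) \<otimes>\<^bsub>A\<^esub> x = s1 \<otimes>\<^bsub>A\<^esub> fst r" using s12 by simp
      then show "\<exists>r \<in> carrier A. fst (c i) \<otimes>\<^bsub>A\<^esub> x = s1 \<otimes>\<^bsub>A\<^esub> r" using r by auto
    qed
    ultimately show "invertible_ideal A I1" unfolding invertible_ideal_def
      by (intro conjI idI1 exI[of _ s1] exI[of _ n] exI[of _ "\<lambda>i. fst (a i)"] exI[of _ "\<lambda>i. fst (c i)"] s1)
  qed
qed

lemma pruefer_RDP_B:
  assumes "cring A" "cring B" "pruefer_ring (RDirProd A B)"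
  shows "pruefer_ring B"
proof -
  interpret A: cring A by fact
  interpret B: cring B by fact
  interpret P: cring "RDirProd A B" using cring_RDP assms by blast
  show ?thesis unfolding pruefer_ring_def
  proof (intro conjI allI impI)
    show "cring B" by fact
    fix I2 assume H: "fg_ideal B I2 \<and> regular_ideal B I2"
    then obtain S2 where S2: "finite S2" "S2 \<subseteq> carrier B" "I2 = genideal B S2" and idI2: "ideal I2 B"
      unfolding fg_ideal_def by blast
    obtain u where u: "u \<in> I2" "regular_elem B u" using H unfolding regular_ideal_def by blast
    define I where "I = carrier A \<times> I2"
    have idI: "ideal I (RDirProd A B)" unfolding I_def
      by (rule ideal_prod[OF assms(1,2) A.oneideal idI2])
    define S where "S = (\<lambda>y. (\<zero>\<^bsub>A\<^esub>, y)) ` S2 \<union> {(\<one>\<^bsub>A\<^esub>, \<zero>\<^bsub>B\<^esub>)}"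
    have Sc: "S \<subseteq> carrier (RDirProd A B)" using S2 unfolding S_def by auto
    have "genideal (RDirProd A B) S = I"
    proof
      have "S2 \<subseteq> I2" using S2 B.genideal_self by blast
      moreover have "\<zero>\<^bsub>B\<^esub> \<in> I2" using idI2 additive_subgroup.zero_closed ideal.axioms(1) by blast
      ultimately have "S \<subseteq> I" unfolding S_def I_def by auto
      then show "genideal (RDirProd A B) S \<subseteq> I" using P.genideal_minimal idI by blast
    next
      define G where "G = genideal (RDirProd A B) S"
      have idG: "ideal G (RDirProd A B)" unfolding G_def using P.genideal_ideal Sc by blast
      have SG: "S \<subseteq> G" unfolding G_def using P.genideal_self Sc by blast
      have "S2 \<subseteq> {y \<in> carrier B. (\<zero>\<^bsub>A\<^esub>, y) \<in> G}" using SG S2 unfolding S_def by auto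
      hence 2: "I2 \<subseteq> {y \<in> carrier B. (\<zero>\<^bsub>A\<^esub>, y) \<in> G}"
        using B.genideal_minimal slice2[OF assms(1,2) idG] S2(3) by blast
      have 1: "carrier A \<subseteq> {x \<in> carrier A. (x, \<zero>\<^bsub>B\<^esub>) \<in> G}"
      proof
        fix x assume x: "x \<in> carrier A"
        have "(x, \<zero>\<^bsub>B\<^esub>) \<otimes>\<^bsub>RDirProd A B\<^esub> (\<one>\<^bsub>A\<^esub>, \<zero>\<^bsub>B\<^esub>) \<in> G"
          using SG x unfolding S_def by (intro ideal.I_l_closed[OF idG]) auto
        then show "x \<in> {x \<in> carrier A. (x, \<zero>\<^bsub>B\<^esub>) \<in> G}" using x by simp
      qed
      show "I \<subseteq> genideal (RDirProd A B) S"
        using slice_decomp[OF assms(1,2) idG] 1 2 unfolding I_def G_def[symmetric] by blast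
    qed
    moreover have "finite S" unfolding S_def using S2(1) by simp
    ultimately have fgI: "fg_ideal (RDirProd A B) I"
      unfolding fg_ideal_def using idI Sc by (intro conjI exI[of _ S]) auto
    have "regular_elem (RDirProd A B) (\<one>\<^bsub>A\<^esub>, u)"
      by (rule reg_pair[OF one_regular[OF assms(1)] u(2)])
    moreover have "(\<one>\<^bsub>A\<^esub>, u) \<in> I" using u unfolding I_def by auto
    ultimately have "regular_ideal (RDirProd A B) I" using idI unfolding regular_ideal_def by blast
    hence "invertible_ideal (RDirProd A B) I" using assms(3) fgI unfolding pruefer_ring_def by blast
    then obtain s n a c where s: "regular_elem (RDirProd A B) s"
      and W: "\<forall>i < (n::nat). a i \<in> I \<and> c i \<in> carrier (RDirProd A B) \<and>
           (\<forall>x \<in> I. \<exists>r \<in> carrier (RDirProd A B). c i \<otimes>\<^bsub>RDirProd A B\<^esub> x = s \<otimes>\<^bsub>RDirProd A B\<^esub> r)"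
      and sum: "finsum (RDirProd A B) (\<lambda>i. a i \<otimes>\<^bsub>RDirProd A B\<^esub> c i) {..<n} = s"
      unfolding invertible_ideal_def by blast
    obtain s1 s2 where s12: "s = (s1, s2)" by (cases s)
    have s2: "regular_elem B s2" using reg_snd[OF assms(1)] s s12 by simp
    have Ic: "I \<subseteq> carrier (RDirProd A B)" using idI ideal.axioms(1) additive_subgroup.a_subset by blast
    have carr: "(\<lambda>i. a i \<otimes>\<^bsub>RDirProd A B\<^esub> c i) \<in> {..<n} \<rightarrow> carrier (RDirProd A B)"
    proof
      fix i assume "i \<in> {..<n}"
      then have "a i \<in> carrier (RDirProd A B)" "c i \<in> carrier (RDirProd A B)" using W Ic by auto
      then show "a i \<otimes>\<^bsub>RDirProd A B\<^esub> c i \<in> carrier (RDirProd A B)" by (rule P.m_closed)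
    qed
    have "finsum B (\<lambda>i. snd (a i) \<otimes>\<^bsub>B\<^esub> snd (c i)) {..<n} = s2"
      using RDP_finsum[OF A.ring_axioms B.ring_axioms carr] sum s12 by simp
    moreover have "\<forall>i < n. snd (a i) \<in> I2 \<and> snd (c i) \<in> carrier B \<and>
           (\<forall>x \<in> I2. \<exists>r \<in> carrier B. snd (c i) \<otimes>\<^bsub>B\<^esub> x = s2 \<otimes>\<^bsub>B\<^esub> r)"
    proof (intro allI impI conjI ballI)
      fix i assume i: "i < n"
      show "snd (a i) \<in> I2" using W i unfolding I_def by auto
      show "snd (c i) \<in> carrier B" using W i by auto
      fix x assume x: "x \<in> I2"
      hence "(\<zero>\<^bsub>A\<^esub>, x) \<in> I" unfolding I_def by auto
      then obtain r where r: "r \<in> carrier (RDirProd A B)" "c i \<otimes>\<^bsub>RDirProd A B\<^esub> (\<zero>\<^bsub>A\<^esub>, x) = s \<otimes>\<^bsub>RDirProd A B\<^esub> r"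
        using W i by blast
      have "snd (c i \<otimes>\<^bsub>RDirProd A B\<^esub> (\<zero>\<^bsub>A\<^esub>, x)) = snd (s \<otimes>\<^bsub>RDirProd A B\<^esub> r)" using r by simp
      hence "snd (c i) \<otimes>\<^bsub>B\<^esub> x = s2 \<otimes>\<^bsub>B\<^esub> snd r" using s12 by simp
      then show "\<exists>r \<in> carrier B. snd (c i) \<otimes>\<^bsub>B\<^esub> x = s2 \<otimes>\<^bsub>B\<^esub> r" using r by auto
    qed
    ultimately show "invertible_ideal B I2" unfolding invertible_ideal_def
      by (intro conjI idI2 exI[of _ s2] exI[of _ n] exI[of _ "\<lambda>i. snd (a i)"] exI[of _ "\<lambda>i. snd (c i)"] s2)
  qed
qed

lemma pruefer_RDP:
  assumes "cring A" "cring B" "pruefer_ring A" "pruefer_ring B"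
  shows "pruefer_ring (RDirProd A B)"
proof -
  interpret A: cring A by fact
  interpret B: cring B by fact
  interpret P: cring "RDirProd A B" using cring_RDP assms by blast
  show ?thesis unfolding pruefer_ring_def
  proof (intro conjI allI impI)
    show "cring (RDirProd A B)" ..
    fix I assume H: "fg_ideal (RDirProd A B) I \<and> regular_ideal (RDirProd A B) I"
    then obtain S where S: "finite S" "S \<subseteq> carrier (RDirProd A B)" "I = genideal (RDirProd A B) S"
      and idI: "ideal I (RDirProd A B)"
      unfolding fg_ideal_def by blast
    define I1 where "I1 = {x \<in> carrier A. (x, \<zero>\<^bsub>B\<^esub>) \<in> I}"
    define I2 where "I2 = {y \<in> carrier B. (\<zero>\<^bsub>A\<^esub>, y) \<in> I}"
    have idI1: "ideal I1 A" unfolding I1_def by (rule slice1[OF assms(1,2) idI])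
    have idI2: "ideal I2 B" unfolding I2_def by (rule slice2[OF assms(1,2) idI])
    have dec: "I = I1 \<times> I2" unfolding I1_def I2_def by (rule slice_decomp[OF assms(1,2) idI])
    have Gs: "genideal (RDirProd A B) S \<subseteq> genideal A (fst ` S) \<times> genideal B (snd ` S)"
    proof (rule P.genideal_minimal)
      have "fst ` S \<subseteq> carrier A" "snd ` S \<subseteq> carrier B" using S(2) by auto
      then show "ideal (genideal A (fst ` S) \<times> genideal B (snd ` S)) (RDirProd A B)"
        using ideal_prod[OF assms(1,2)] A.genideal_ideal B.genideal_ideal by blast
      have "fst ` S \<subseteq> genideal A (fst ` S)" "snd ` S \<subseteq> genideal B (snd ` S)"
        using A.genideal_self B.genideal_self \<open>fst ` S \<subseteq> carrier A\<close> \<open>snd ` S \<subseteq> carrier B\<close> by auto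
      then show "S \<subseteq> genideal A (fst ` S) \<times> genideal B (snd ` S)" by force
    qed
    have SI: "S \<subseteq> I" using S P.genideal_self by blast
    have "I1 = genideal A (fst ` S)"
    proof
      show "I1 \<subseteq> genideal A (fst ` S)" using Gs S(3) unfolding I1_def by auto
      have "fst ` S \<subseteq> I1" using SI dec by force
      then show "genideal A (fst ` S) \<subseteq> I1" using A.genideal_minimal idI1 by blast
    qed
    hence fg1: "fg_ideal A I1" unfolding fg_ideal_def using idI1 S(1,2)
      by (intro conjI exI[of _ "fst ` S"]) auto
    have "I2 = genideal B (snd ` S)"
    proof
      show "I2 \<subseteq> genideal B (snd ` S)" using Gs S(3) unfolding I2_def by auto
      have "snd ` S \<subseteq> I2" using SI dec by force
      then show "genideal B (snd ` S) \<subseteq> I2" using B.genideal_minimal idI2 by blast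
    qed
    hence fg2: "fg_ideal B I2" unfolding fg_ideal_def using idI2 S(1,2)
      by (intro conjI exI[of _ "snd ` S"]) auto
    obtain u v where uv: "(u,v) \<in> I" "regular_elem (RDirProd A B) (u,v)"
      using H unfolding regular_ideal_def by auto
    have "regular_ideal A I1" unfolding regular_ideal_def using idI1 uv dec reg_fst[OF assms(2) uv(2)] by auto
    hence "invertible_ideal A I1" using assms(3) fg1 unfolding pruefer_ring_def by blast
    then obtain s1 n1 a1 c1 where s1: "regular_elem A s1"
      and W1: "\<forall>i < (n1::nat). a1 i \<in> I1 \<and> c1 i \<in> carrier A \<and>
           (\<forall>x \<in> I1. \<exists>r \<in> carrier A. c1 i \<otimes>\<^bsub>A\<^esub> x = s1 \<otimes>\<^bsub>A\<^esub> r)"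
      and sum1: "finsum A (\<lambda>i. a1 i \<otimes>\<^bsub>A\<^esub> c1 i) {..<n1} = s1"
      unfolding invertible_ideal_def by blast
    have "regular_ideal B I2" unfolding regular_ideal_def using idI2 uv dec reg_snd[OF assms(1) uv(2)] by auto
    hence "invertible_ideal B I2" using assms(4) fg2 unfolding pruefer_ring_def by blast
    then obtain s2 n2 a2 c2 where s2: "regular_elem B s2"
      and W2: "\<forall>i < (n2::nat). a2 i \<in> I2 \<and> c2 i \<in> carrier B \<and>
           (\<forall>x \<in> I2. \<exists>r \<in> carrier B. c2 i \<otimes>\<^bsub>B\<^esub> x = s2 \<otimes>\<^bsub>B\<^esub> r)"
      and sum2: "finsum B (\<lambda>i. a2 i \<otimes>\<^bsub>B\<^esub> c2 i) {..<n2} = s2"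
      unfolding invertible_ideal_def by blast
    obtain a1' c1' where W1': "\<forall>i < n1 + n2. a1' i \<in> I1 \<and> c1' i \<in> carrier A \<and>
           (\<forall>x \<in> I1. \<exists>r \<in> carrier A. c1' i \<otimes>\<^bsub>A\<^esub> x = s1 \<otimes>\<^bsub>A\<^esub> r)"
      and sum1': "finsum A (\<lambda>i. a1' i \<otimes>\<^bsub>A\<^esub> c1' i) {..<n1 + n2} = s1"
      using inv_pad[OF assms(1) s1 idI1 W1 sum1, of "n1 + n2"] by auto
    obtain a2' c2' where W2': "\<forall>i < n1 + n2. a2' i \<in> I2 \<and> c2' i \<in> carrier B \<and>
           (\<forall>x \<in> I2. \<exists>r \<in> carrier B. c2' i \<otimes>\<^bsub>B\<^esub> x = s2 \<otimes>\<^bsub>B\<^esub> r)"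
      and sum2': "finsum B (\<lambda>i. a2' i \<otimes>\<^bsub>B\<^esub> c2' i) {..<n1 + n2} = s2"
      using inv_pad[OF assms(2) s2 idI2 W2 sum2, of "n1 + n2"] by auto
    have I1c: "I1 \<subseteq> carrier A" unfolding I1_def by auto
    have I2c: "I2 \<subseteq> carrier B" unfolding I2_def by auto
    define m where "m = n1 + n2"
    define a where "a i = (a1' i, a2' i)" for i
    define c where "c i = (c1' i, c2' i)" for i
    have carr: "(\<lambda>i. a i \<otimes>\<^bsub>RDirProd A B\<^esub> c i) \<in> {..<m} \<rightarrow> carrier (RDirProd A B)"
    proof
      fix i assume "i \<in> {..<m}"
      then have "a1' i \<in> carrier A" "c1' i \<in> carrier A" "a2' i \<in> carrier B" "c2' i \<in> carrier B"
        using W1' W2' I1c I2c unfolding m_def by auto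
      then show "a i \<otimes>\<^bsub>RDirProd A B\<^esub> c i \<in> carrier (RDirProd A B)"
        unfolding a_def c_def by simp
    qed
    have "finsum (RDirProd A B) (\<lambda>i. a i \<otimes>\<^bsub>RDirProd A B\<^esub> c i) {..<m} = (s1, s2)"
      using RDP_finsum[OF A.ring_axioms B.ring_axioms carr] sum1' sum2'
      unfolding a_def c_def m_def by simp
    moreover have "\<forall>i < m. a i \<in> I \<and> c i \<in> carrier (RDirProd A B) \<and>
           (\<forall>x \<in> I. \<exists>r \<in> carrier (RDirProd A B). c i \<otimes>\<^bsub>RDirProd A B\<^esub> x = (s1, s2) \<otimes>\<^bsub>RDirProd A B\<^esub> r)"
    proof (intro allI impI conjI ballI)
      fix i assume i: "i < m"
      show "a i \<in> I" using W1' W2' i dec unfolding a_def m_def by auto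
      show "c i \<in> carrier (RDirProd A B)" using W1' W2' i unfolding c_def m_def by auto
      fix x assume "x \<in> I"
      then obtain x1 x2 where x: "x = (x1, x2)" "x1 \<in> I1" "x2 \<in> I2" using dec by auto
      obtain r1 where r1: "r1 \<in> carrier A" "c1' i \<otimes>\<^bsub>A\<^esub> x1 = s1 \<otimes>\<^bsub>A\<^esub> r1"
        using W1' i x unfolding m_def by blast
      obtain r2 where r2: "r2 \<in> carrier B" "c2' i \<otimes>\<^bsub>B\<^esub> x2 = s2 \<otimes>\<^bsub>B\<^esub> r2"
        using W2' i x unfolding m_def by blast
      show "\<exists>r \<in> carrier (RDirProd A B). c i \<otimes>\<^bsub>RDirProd A B\<^esub> x = (s1, s2) \<otimes>\<^bsub>RDirProd A B\<^esub> r"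
        using r1 r2 x unfolding c_def by (intro bexI[of _ "(r1, r2)"]) auto
    qed
    moreover have "regular_elem (RDirProd A B) (s1, s2)" by (rule reg_pair[OF s1 s2])
    ultimately show "invertible_ideal (RDirProd A B) I" unfolding invertible_ideal_def
      by (intro conjI idI exI[of _ "(s1, s2)"] exI[of _ m] exI[of _ a] exI[of _ c])
  qed
qed

lemma amalg_mult[simp]: "x \<otimes>\<^bsub>amalgamation A B f J\<^esub> y = x \<otimes>\<^bsub>RDirProd A B\<^esub> y"
  by (simp add: amalgamation_def)
lemma amalg_add[simp]: "x \<oplus>\<^bsub>amalgamation A B f J\<^esub> y = x \<oplus>\<^bsub>RDirProd A B\<^esub> y"
  by (simp add: amalgamation_def)
lemma amalg_zero[simp]: "\<zero>\<^bsub>amalgamation A B f J\<^esub> = \<zero>\<^bsub>RDirProd A B\<^esub>"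
  by (simp add: amalgamation_def)
lemma amalg_one[simp]: "\<one>\<^bsub>amalgamation A B f J\<^esub> = \<one>\<^bsub>RDirProd A B\<^esub>"
  by (simp add: amalgamation_def)

lemma amalg_mem:
  assumes "cring A" "cring B" "f \<in> ring_hom A B" "ideal J B"
  shows "(x,y) \<in> carrier (amalgamation A B f J) \<longleftrightarrow>
     x \<in> carrier A \<and> y \<in> carrier B \<and> y \<ominus>\<^bsub>B\<^esub> f x \<in> J"
proof -
  interpret A: cring A by fact
  interpret B: cring B by fact
  interpret J: ideal J B by fact
  have fx: "\<And>x. x \<in> carrier A \<Longrightarrow> f x \<in> carrier B" by (rule ring_hom_closed[OF assms(3)])
  have Jc: "J \<subseteq> carrier B" by (rule J.a_subset)
  have C: "carrier (amalgamation A B f J) = {(a, f a \<oplus>\<^bsub>B\<^esub> b) | a b. a \<in> carrier A \<and> b \<in> J}"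
    by (simp add: amalgamation_def)
  show ?thesis
  proof
    assume "(x,y) \<in> carrier (amalgamation A B f J)"
    then obtain b where b: "x \<in> carrier A" "b \<in> J" "y = f x \<oplus>\<^bsub>B\<^esub> b" unfolding C by auto
    have "y \<ominus>\<^bsub>B\<^esub> f x = b" using b fx[of x] Jc
      by (simp add: B.minus_eq B.a_comm B.a_lcomm B.r_neg B.a_assoc subsetD)
    then show "x \<in> carrier A \<and> y \<in> carrier B \<and> y \<ominus>\<^bsub>B\<^esub> f x \<in> J" using b fx[of x] Jc by auto
  next
    assume H: "x \<in> carrier A \<and> y \<in> carrier B \<and> y \<ominus>\<^bsub>B\<^esub> f x \<in> J"
    have "f x \<oplus>\<^bsub>B\<^esub> (y \<ominus>\<^bsub>B\<^esub> f x) = y" using H fx[of x]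
      by (simp add: B.minus_eq B.a_comm B.a_lcomm B.r_neg B.a_assoc)
    then show "(x,y) \<in> carrier (amalgamation A B f J)" unfolding C using H
      by (intro CollectI exI[of _ x] exI[of _ "y \<ominus>\<^bsub>B\<^esub> f x"]) auto
  qed
qed

lemma amalg_full:
  assumes "f \<in> ring_hom A B" "J = carrier B" "ring B"
  shows "amalgamation A B f J = RDirProd A B"
proof -
  interpret B: ring B by fact
  have fx: "\<And>x. x \<in> carrier A \<Longrightarrow> f x \<in> carrier B" by (rule ring_hom_closed[OF assms(1)])
  have "{(a, f a \<oplus>\<^bsub>B\<^esub> b) | a b. a \<in> carrier A \<and> b \<in> J} = carrier (RDirProd A B)"
  proof (intro equalityI subsetI)
    fix p assume "p \<in> {(a, f a \<oplus>\<^bsub>B\<^esub> b) | a b. a \<in> carrier A \<and> b \<in> J}"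
    then show "p \<in> carrier (RDirProd A B)" using fx assms(2) by auto
  next
    fix p assume "p \<in> carrier (RDirProd A B)"
    then obtain x y where p: "p = (x,y)" "x \<in> carrier A" "y \<in> carrier B" by auto
    have "f x \<oplus>\<^bsub>B\<^esub> (y \<ominus>\<^bsub>B\<^esub> f x) = y" using p fx[of x]
      by (simp add: B.minus_eq B.a_comm B.a_lcomm B.r_neg B.a_assoc)
    then show "p \<in> {(a, f a \<oplus>\<^bsub>B\<^esub> b) | a b. a \<in> carrier A \<and> b \<in> J}" using p fx[of x] assms(2)
      by (intro CollectI exI[of _ x] exI[of _ "y \<ominus>\<^bsub>B\<^esub> f x"]) auto
  qed
  then show ?thesis unfolding amalgamation_def by simp
qed

lemma RDP_fst_add[simp]: "fst (p \<oplus>\<^bsub>RDirProd A B\<^esub> q) = fst p \<oplus>\<^bsub>A\<^esub> fst q"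
  by (cases p, cases q) simp

lemma (in ring) cancel_regular:
  assumes "regular_elem R s" "a \<in> carrier R" "b \<in> carrier R" "s \<otimes> a = s \<otimes> b"
  shows "a = b"
proof -
  have sc: "s \<in> carrier R" using assms(1) unfolding regular_elem_def by simp
  have "s \<otimes> (a \<ominus> b) = s \<otimes> a \<ominus> s \<otimes> b"
    using sc assms(2,3) by (simp add: minus_eq r_distr r_minus)
  also have "\<dots> = \<zero>" using assms(4) sc assms(3) by (simp add: minus_eq r_neg)
  finally have "a \<ominus> b = \<zero>" using assms(1) assms(2,3) unfolding regular_elem_def by simp
  have "a = a \<oplus> (\<ominus> b \<oplus> b)" using assms(2,3) by (simp add: l_neg)
  also have "\<dots> = (a \<ominus> b) \<oplus> b" using assms(2,3) by (simp add: minus_eq a_assoc)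
  also have "\<dots> = b" using \<open>a \<ominus> b = \<zero>\<close> assms(3) by simp
  finally show ?thesis .
qed


lemma key:
  fixes A :: "('a, 'm) ring_scheme" and B :: "('b, 'n) ring_scheme"
    and f :: "'a \<Rightarrow> 'b" and J :: "'b set"
  assumes "cring A" and "cring B"
    and "f \<in> ring_hom A B"
    and "ideal J B"
    and "regular_ideal A {a \<in> carrier A. f a \<in> J}"
    and "regular_ideal B J"
    and "pruefer_ring (amalgamation A B f J)"
  shows "J = carrier B"
proof -
  define R where "R = amalgamation A B f J"
  interpret A: cring A by fact
  interpret B: cring B by fact
  interpret J: ideal J B by fact
  interpret R: cring R using assms(7) unfolding pruefer_ring_def R_def by blast
  interpret F: ring_hom_ring A B f by (rule ring_hom_ringI2[OF A.ring_axioms B.ring_axioms assms(3)])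
  have M: "\<And>x y. (x,y) \<in> carrier R \<longleftrightarrow> x \<in> carrier A \<and> y \<in> carrier B \<and> y \<ominus>\<^bsub>B\<^esub> f x \<in> J"
    unfolding R_def by (rule amalg_mem[OF assms(1-4)])
  have Rc: "carrier R \<subseteq> carrier A \<times> carrier B" using M by auto
  have Jc: "J \<subseteq> carrier B" by (rule J.a_subset)
  obtain s0 where s0: "s0 \<in> carrier A" "f s0 \<in> J" "regular_elem A s0"
    using assms(5) unfolding regular_ideal_def by auto
  obtain j0 where j0: "j0 \<in> J" "regular_elem B j0"
    using assms(6) unfolding regular_ideal_def by auto
  have j0c: "j0 \<in> carrier B" using j0 Jc by auto
  have fs0: "f s0 \<in> carrier B" using s0 by simp
  have Jminus: "\<And>x y. x \<in> J \<Longrightarrow> y \<in> J \<Longrightarrow> x \<ominus>\<^bsub>B\<^esub> y \<in> J"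
    by (simp add: B.minus_eq)
  define g1 where "g1 = (s0, j0)"
  define g2 where "g2 = (s0, \<zero>\<^bsub>B\<^esub>)"
  have g1R: "g1 \<in> carrier R" unfolding g1_def M using s0 j0c Jminus[OF j0(1) s0(2)] by auto
  have g2R: "g2 \<in> carrier R" unfolding g2_def M using s0 Jminus[OF J.zero_closed s0(2)] by auto
  have g1reg: "regular_elem R g1" unfolding regular_elem_def
  proof (intro conjI ballI impI)
    show "g1 \<in> carrier R" by (rule g1R)
    fix y assume y: "y \<in> carrier R" "g1 \<otimes>\<^bsub>R\<^esub> y = \<zero>\<^bsub>R\<^esub>"
    obtain y1 y2 where yy: "y = (y1, y2)" "y1 \<in> carrier A" "y2 \<in> carrier B" using y Rc by auto
    have "s0 \<otimes>\<^bsub>A\<^esub> y1 = \<zero>\<^bsub>A\<^esub>" "j0 \<otimes>\<^bsub>B\<^esub> y2 = \<zero>\<^bsub>B\<^esub>"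
      using y(2) yy unfolding g1_def R_def by simp_all
    hence "y1 = \<zero>\<^bsub>A\<^esub>" "y2 = \<zero>\<^bsub>B\<^esub>" using s0(3) j0(2) yy unfolding regular_elem_def by auto
    then show "y = \<zero>\<^bsub>R\<^esub>" using yy unfolding R_def by simp
  qed
  define G where "G = genideal R {g1, g2}"
  have gc: "{g1, g2} \<subseteq> carrier R" using g1R g2R by auto
  have idG: "ideal G R" unfolding G_def by (rule R.genideal_ideal[OF gc])
  have gG: "{g1, g2} \<subseteq> G" unfolding G_def by (rule R.genideal_self[OF gc])
  have "fg_ideal R G" unfolding fg_ideal_def using idG gc
    by (intro conjI exI[of _ "{g1, g2}"]) (auto simp: G_def)
  moreover have "regular_ideal R G" unfolding regular_ideal_def using idG gG g1reg by auto
  ultimately have "invertible_ideal R G" using assms(7) unfolding pruefer_ring_def R_def by blast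
  then obtain s n a c where s: "regular_elem R s"
      and W: "\<forall>i < (n::nat). a i \<in> G \<and> c i \<in> carrier R \<and>
           (\<forall>x \<in> G. \<exists>r \<in> carrier R. c i \<otimes>\<^bsub>R\<^esub> x = s \<otimes>\<^bsub>R\<^esub> r)"
      and sum: "finsum R (\<lambda>i. a i \<otimes>\<^bsub>R\<^esub> c i) {..<n} = s"
      unfolding invertible_ideal_def by blast
  have sR: "s \<in> carrier R" using s unfolding regular_elem_def by simp
  obtain s1 \<sigma> where sig: "s = (s1, \<sigma>)" "s1 \<in> carrier A" "\<sigma> \<in> carrier B" using sR Rc by auto
  have s1reg: "regular_elem A s1" unfolding regular_elem_def
  proof (intro conjI ballI impI)
    show "s1 \<in> carrier A" by fact
    fix y assume y: "y \<in> carrier A" "s1 \<otimes>\<^bsub>A\<^esub> y = \<zero>\<^bsub>A\<^esub>"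
    have fy: "f (y \<otimes>\<^bsub>A\<^esub> s0) \<in> J" using y s0 by (simp add: J.I_l_closed)
    have zR: "(y \<otimes>\<^bsub>A\<^esub> s0, \<zero>\<^bsub>B\<^esub>) \<in> carrier R" unfolding M
      using y s0 Jminus[OF J.zero_closed fy] by auto
    have "s1 \<otimes>\<^bsub>A\<^esub> (y \<otimes>\<^bsub>A\<^esub> s0) = \<zero>\<^bsub>A\<^esub>"
      using y s0 sig A.m_assoc[of s1 y s0] by simp
    hence "s \<otimes>\<^bsub>R\<^esub> (y \<otimes>\<^bsub>A\<^esub> s0, \<zero>\<^bsub>B\<^esub>) = \<zero>\<^bsub>R\<^esub>"
      using y s0 sig unfolding R_def by simp
    hence "(y \<otimes>\<^bsub>A\<^esub> s0, \<zero>\<^bsub>B\<^esub>) = \<zero>\<^bsub>R\<^esub>" using s zR unfolding regular_elem_def by blast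
    hence "s0 \<otimes>\<^bsub>A\<^esub> y = \<zero>\<^bsub>A\<^esub>" using y s0 unfolding R_def by (simp add: A.m_comm)
    then show "y = \<zero>\<^bsub>A\<^esub>" using s0(3) y unfolding regular_elem_def by blast
  qed
  have sigreg: "regular_elem B \<sigma>" unfolding regular_elem_def
  proof (intro conjI ballI impI)
    show "\<sigma> \<in> carrier B" by fact
    fix y assume y: "y \<in> carrier B" "\<sigma> \<otimes>\<^bsub>B\<^esub> y = \<zero>\<^bsub>B\<^esub>"
    have jy: "j0 \<otimes>\<^bsub>B\<^esub> y \<in> J" using y j0 by (simp add: J.I_r_closed)
    have zR: "(\<zero>\<^bsub>A\<^esub>, j0 \<otimes>\<^bsub>B\<^esub> y) \<in> carrier R" unfolding M
      using y jy Jc by (auto simp: B.minus_eq)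
    have "\<sigma> \<otimes>\<^bsub>B\<^esub> (j0 \<otimes>\<^bsub>B\<^esub> y) = \<zero>\<^bsub>B\<^esub>"
      using y j0c sig B.m_lcomm[of \<sigma> j0 y] by simp
    hence "s \<otimes>\<^bsub>R\<^esub> (\<zero>\<^bsub>A\<^esub>, j0 \<otimes>\<^bsub>B\<^esub> y) = \<zero>\<^bsub>R\<^esub>"
      using y j0c sig unfolding R_def by simp
    hence "(\<zero>\<^bsub>A\<^esub>, j0 \<otimes>\<^bsub>B\<^esub> y) = \<zero>\<^bsub>R\<^esub>" using s zR unfolding regular_elem_def by blast
    hence "j0 \<otimes>\<^bsub>B\<^esub> y = \<zero>\<^bsub>B\<^esub>" unfolding R_def by simp
    then show "y = \<zero>\<^bsub>B\<^esub>" using j0(2) y unfolding regular_elem_def by blast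
  qed
  define K where "K = {t \<in> carrier R. f (fst t) \<in> J}"
  have hom: "(\<lambda>t. f (fst t)) \<in> ring_hom R B"
  proof (rule ring_hom_memI)
    show "\<And>x. x \<in> carrier R \<Longrightarrow> f (fst x) \<in> carrier B" using Rc by auto
  next
    fix x y assume "x \<in> carrier R" "y \<in> carrier R"
    then have xy: "fst x \<in> carrier A" "fst y \<in> carrier A" using Rc by auto
    show "f (fst (x \<otimes>\<^bsub>R\<^esub> y)) = f (fst x) \<otimes>\<^bsub>B\<^esub> f (fst y)"
      using xy unfolding R_def by simp
    show "f (fst (x \<oplus>\<^bsub>R\<^esub> y)) = f (fst x) \<oplus>\<^bsub>B\<^esub> f (fst y)"
      using xy unfolding R_def by simp
  next
    show "f (fst \<one>\<^bsub>R\<^esub>) = \<one>\<^bsub>B\<^esub>" unfolding R_def by simp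
  qed
  have idK: "ideal K R" unfolding K_def
    by (rule ring_hom_ring.ideal_vimage[OF ring_hom_ringI2[OF R.ring_axioms B.ring_axioms hom] assms(4)])
  interpret K: ideal K R by (rule idK)
  define M' where "M' = {x \<in> carrier R. \<exists>t\<in>K. x = s \<otimes>\<^bsub>R\<^esub> t}"
  have idM: "ideal M' R"
  proof (rule R.ideal_crit)
    show "M' \<subseteq> carrier R" unfolding M'_def by auto
    show "\<zero>\<^bsub>R\<^esub> \<in> M'" unfolding M'_def using sR by (auto intro!: bexI[of _ "\<zero>\<^bsub>R\<^esub>"])
  next
    fix x y assume "x \<in> M'" "y \<in> M'"
    then obtain t u where "x = s \<otimes>\<^bsub>R\<^esub> t" "y = s \<otimes>\<^bsub>R\<^esub> u" "t \<in> K" "u \<in> K" unfolding M'_def by auto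
    moreover have "t \<in> carrier R" "u \<in> carrier R" using calculation K.a_subset by auto
    ultimately show "x \<oplus>\<^bsub>R\<^esub> y \<in> M'" unfolding M'_def using sR
      by (auto simp: R.r_distr intro!: bexI[of _ "t \<oplus>\<^bsub>R\<^esub> u"])
  next
    fix x assume "x \<in> M'"
    then obtain t where "x = s \<otimes>\<^bsub>R\<^esub> t" "t \<in> K" unfolding M'_def by auto
    moreover have "t \<in> carrier R" using calculation K.a_subset by auto
    ultimately show "\<ominus>\<^bsub>R\<^esub> x \<in> M'" unfolding M'_def using sR
      by (auto simp: R.r_minus intro!: bexI[of _ "\<ominus>\<^bsub>R\<^esub> t"])
  next
    fix x r assume "x \<in> M'" "r \<in> carrier R"
    then obtain t where "x = s \<otimes>\<^bsub>R\<^esub> t" "t \<in> K" unfolding M'_def by auto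
    moreover have "t \<in> carrier R" using calculation K.a_subset by auto
    ultimately show "r \<otimes>\<^bsub>R\<^esub> x \<in> M'" unfolding M'_def using sR \<open>r \<in> carrier R\<close>
      by (auto simp: R.m_lcomm intro!: bexI[of _ "r \<otimes>\<^bsub>R\<^esub> t"] K.I_l_closed)
  qed
  interpret M': ideal M' R by (rule idM)
  have inM: "a i \<otimes>\<^bsub>R\<^esub> c i \<in> M'" if i: "i < n" for i
  proof -
    define L where "L = {x \<in> carrier R. x \<otimes>\<^bsub>R\<^esub> c i \<in> M'}"
    have ci: "c i \<in> carrier R" using W i by auto
    have idL: "ideal L R"
    proof (rule R.ideal_crit)
      show "L \<subseteq> carrier R" unfolding L_def by auto
      show "\<zero>\<^bsub>R\<^esub> \<in> L" unfolding L_def using ci by simp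
    next
      fix x y assume "x \<in> L" "y \<in> L"
      then show "x \<oplus>\<^bsub>R\<^esub> y \<in> L" unfolding L_def using ci by (auto simp: R.l_distr)
    next
      fix x assume "x \<in> L"
      then show "\<ominus>\<^bsub>R\<^esub> x \<in> L" unfolding L_def using ci by (auto simp: R.l_minus)
    next
      fix x r assume "x \<in> L" "r \<in> carrier R"
      then show "r \<otimes>\<^bsub>R\<^esub> x \<in> L" unfolding L_def using ci by (auto simp: R.m_assoc M'.I_l_closed)
    qed
    obtain r1 where r1: "r1 \<in> carrier R" "c i \<otimes>\<^bsub>R\<^esub> g1 = s \<otimes>\<^bsub>R\<^esub> r1" using W i gG by blast
    obtain r2 where r2: "r2 \<in> carrier R" "c i \<otimes>\<^bsub>R\<^esub> g2 = s \<otimes>\<^bsub>R\<^esub> r2" using W i gG by blast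
    obtain \<gamma> \<delta> where cc: "c i = (\<gamma>, \<delta>)" "\<gamma> \<in> carrier A" "\<delta> \<in> carrier B" using ci Rc by auto
    obtain \<rho>1 \<tau>1 where rr1: "r1 = (\<rho>1, \<tau>1)" "\<rho>1 \<in> carrier A" "\<tau>1 \<in> carrier B" using r1 Rc by auto
    obtain \<rho>2 \<tau>2 where rr2: "r2 = (\<rho>2, \<tau>2)" "\<rho>2 \<in> carrier A" "\<tau>2 \<in> carrier B" using r2 Rc by auto
    have e1: "\<gamma> \<otimes>\<^bsub>A\<^esub> s0 = s1 \<otimes>\<^bsub>A\<^esub> \<rho>1" using r1(2) cc rr1 sig unfolding g1_def R_def by simp
    have P2: "(\<gamma> \<otimes>\<^bsub>A\<^esub> s0, \<delta> \<otimes>\<^bsub>B\<^esub> \<zero>\<^bsub>B\<^esub>) = (s1 \<otimes>\<^bsub>A\<^esub> \<rho>2, \<sigma> \<otimes>\<^bsub>B\<^esub> \<tau>2)"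
      using r2(2) cc rr2 sig unfolding g2_def R_def by (simp only: amalg_mult RDP_mult)
    hence e2: "\<gamma> \<otimes>\<^bsub>A\<^esub> s0 = s1 \<otimes>\<^bsub>A\<^esub> \<rho>2" and e3: "\<delta> \<otimes>\<^bsub>B\<^esub> \<zero>\<^bsub>B\<^esub> = \<sigma> \<otimes>\<^bsub>B\<^esub> \<tau>2"
      by (simp_all only: prod.inject)
    have "\<rho>1 = \<rho>2" using A.cancel_regular[OF s1reg rr1(2) rr2(2)] e1 e2 by simp
    have "\<sigma> \<otimes>\<^bsub>B\<^esub> \<tau>2 = \<zero>\<^bsub>B\<^esub>" using e3 B.r_null[OF cc(3)] by metis
    hence "\<tau>2 = \<zero>\<^bsub>B\<^esub>" using sigreg rr2 unfolding regular_elem_def by blast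
    hence "\<zero>\<^bsub>B\<^esub> \<ominus>\<^bsub>B\<^esub> f \<rho>2 \<in> J" using r2(1) rr2 M by simp
    hence "\<ominus>\<^bsub>B\<^esub> f \<rho>2 \<in> J" using rr2 by (simp add: B.minus_eq)
    hence "\<ominus>\<^bsub>B\<^esub> (\<ominus>\<^bsub>B\<^esub> f \<rho>2) \<in> J" by (rule J.a_inv_closed)
    hence fr: "f \<rho>2 \<in> J" using rr2 by (simp add: B.minus_minus)
    have r1K: "r1 \<in> K" unfolding K_def using r1 rr1 fr \<open>\<rho>1 = \<rho>2\<close> by simp
    have r2K: "r2 \<in> K" unfolding K_def using r2 rr2 fr by simp
    have "g1 \<otimes>\<^bsub>R\<^esub> c i = s \<otimes>\<^bsub>R\<^esub> r1" using r1(2) R.m_comm[OF g1R ci] by simp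
    moreover have "g1 \<otimes>\<^bsub>R\<^esub> c i \<in> carrier R" using g1R ci by (rule R.m_closed)
    ultimately have "g1 \<otimes>\<^bsub>R\<^esub> c i \<in> M'" unfolding M'_def using r1K by blast
    hence g1L: "g1 \<in> L" unfolding L_def using g1R by blast
    have "g2 \<otimes>\<^bsub>R\<^esub> c i = s \<otimes>\<^bsub>R\<^esub> r2" using r2(2) R.m_comm[OF g2R ci] by simp
    moreover have "g2 \<otimes>\<^bsub>R\<^esub> c i \<in> carrier R" using g2R ci by (rule R.m_closed)
    ultimately have "g2 \<otimes>\<^bsub>R\<^esub> c i \<in> M'" unfolding M'_def using r2K by blast
    hence g2L: "g2 \<in> L" unfolding L_def using g2R by blast
    have "{g1, g2} \<subseteq> L" using g1L g2L by simp
    hence GL: "G \<subseteq> L" unfolding G_def by (rule R.genideal_minimal[OF idL])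
    have "a i \<in> G" using W i by simp
    then show ?thesis using GL unfolding L_def by blast
  qed
  have "s \<in> M'" using R.finsum_ideal[OF idM, of n "\<lambda>i. a i \<otimes>\<^bsub>R\<^esub> c i"] inM sum by simp
  then obtain t where t: "t \<in> K" "s = s \<otimes>\<^bsub>R\<^esub> t" unfolding M'_def by auto
  have tc: "t \<in> carrier R" using t K.a_subset by auto
  have "s \<otimes>\<^bsub>R\<^esub> t = s \<otimes>\<^bsub>R\<^esub> \<one>\<^bsub>R\<^esub>" using t sR by simp
  hence "t = \<one>\<^bsub>R\<^esub>" using R.cancel_regular[OF s tc R.one_closed] by simp
  hence "\<one>\<^bsub>R\<^esub> \<in> K" using t by simp
  hence "\<one>\<^bsub>B\<^esub> \<in> J" unfolding K_def R_def by simp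
  then show ?thesis by (rule J.one_imp_carrier)
qed


theorem theorem3p1:
  fixes A :: "('a, 'm) ring_scheme" and B :: "('b, 'n) ring_scheme"
    and f :: "'a \<Rightarrow> 'b" and J :: "'b set"
  assumes "cring A" and "cring B"
    and "f \<in> ring_hom A B"
    and "ideal J B"
    and "regular_ideal A {a \<in> carrier A. f a \<in> J}"
    and "regular_ideal B J"
  shows "pruefer_ring (amalgamation A B f J) \<longleftrightarrow>
           (pruefer_ring A \<and> pruefer_ring B \<and> J = carrier B)"
proof
  assume H: "pruefer_ring (amalgamation A B f J)"
  have J: "J = carrier B" by (rule key[OF assms H])
  have "amalgamation A B f J = RDirProd A B"
    by (rule amalg_full[OF assms(3) J cring.axioms(1)[OF assms(2)]])
  hence P: "pruefer_ring (RDirProd A B)" using H by simp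
  show "pruefer_ring A \<and> pruefer_ring B \<and> J = carrier B"
    using pruefer_RDP_A[OF assms(1,2) P] pruefer_RDP_B[OF assms(1,2) P] J by blast
next
  assume H: "pruefer_ring A \<and> pruefer_ring B \<and> J = carrier B"
  have "amalgamation A B f J = RDirProd A B"
    using H by (intro amalg_full[OF assms(3) _ cring.axioms(1)[OF assms(2)]]) simp
  then show "pruefer_ring (amalgamation A B f J)"
    using pruefer_RDP[OF assms(1,2)] H by simp
qed

end
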